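(* Let $M$ be a matroid on ground set $E$ and let $B_1<B_2<\dots<B_n$ be an ordering of all its bases such that for every $i=1,\dots,n$ there exists a linear functional $\ell_i\in(\mathbb{R}^E)^*$ with $\ell_i(B_j)<\ell_i(B_i)$ if and only if $j<i$. Then this order is a shelling order of $\mathcal{I}(M)$, and the restriction set of each basis $B_i$ is $\mathcal{R}(B_i)=IP_{\ell_i}(B_i)$.
   Context: A linear functional $\ell\in(\mathbb{R}^E)^*$ is identified with a function $\ell:E\to\mathbb{R}$, and $\ell(B)=\sum_{b\in B}\ell(b)$ (equivalently, $\ell$ evaluated at the characteristic vector $\chi_B$). $\mathcal{I}(M)$ is the independence complex of $M$, whose facets are the bases. A shelling order of a pure simplicial complex is a total order $F_1<\dots<F_k$ of its facets such that for each $j\ge2$, $\langle F_1,\dots,F_{j-1}\rangle\cap\langle F_j\rangle$ is pure of dimension one less than the complex; the restriction set $\mathcal{R}(F_j)$ is the unique subset of $F_j$ such that the faces of $\langle F_1,\dots,F_j\rangle$ not in $\langle F_1,\dots,F_{j-1}\rangle$ are exactly the subsets of $F_j$ containing $\mathcal{R}(F_j)$. For a basis $B$, $IP_\ell(B)$ (the internally passive set with respect to the order on $E$ induced by $\ell$) is the set of $b\in B$ for which there is $b'\in E\setminus B$ with $\ell(b')<\ell(b)$ and $(B\setminus\{b\})\cup\{b'\}$ a basis. *)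

theory Defs
  imports Complex_Main
begin

definition matroid_bases :: "'a set \<Rightarrow> 'a set set \<Rightarrow> bool" where
  "matroid_bases E \<B> \<longleftrightarrow> finite E \<and> \<B> \<noteq> {} \<and> (\<forall>B\<in>\<B>. B \<subseteq> E) \<and>
     (\<forall>B1\<in>\<B>. \<forall>B2\<in>\<B>. \<forall>x\<in>B1 - B2. \<exists>y\<in>B2 - B1. insert y (B1 - {x}) \<in> \<B>)"

definition indep_complex :: "'a set set \<Rightarrow> 'a set set" where
  "indep_complex \<B> = {S. \<exists>B\<in>\<B>. S \<subseteq> B}"

definition gen_complex :: "'a set set \<Rightarrow> 'a set set" where
  "gen_complex F = {S. \<exists>B\<in>F. S \<subseteq> B}"

definition facets :: "'a set set \<Rightarrow> 'a set set" where
  "facets K = {F\<in>K. \<forall>G\<in>K. F \<subseteq> G \<longrightarrow> G = F}"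

text \<open>A (finite) complex is pure of dimension d iff it is nonempty and all its
  facets have dimension d, i.e. cardinality d+1. We use cardinalities: pure_card K k
  means pure of dimension k-1.\<close>
definition pure_card :: "'a set set \<Rightarrow> nat \<Rightarrow> bool" where
  "pure_card K k \<longleftrightarrow> K \<noteq> {} \<and> (\<forall>F\<in>facets K. card F = k)"

text \<open>Shelling order (list indices are 0-based; index j \<ge> 1 corresponds to j \<ge> 2
  in the paper): for every j \<ge> 1, the intersection of the complex generated by the
  earlier facets with the simplex of F_j is pure of dimension one less than F_j.\<close>
definition shelling_order :: "'a set list \<Rightarrow> bool" where
  "shelling_order Fs \<longleftrightarrow>
     (\<forall>j. 1 \<le> j \<and> j < length Fs \<longrightarrow>
        pure_card (gen_complex (set (take j Fs)) \<inter> gen_complex {Fs ! j}) (card (Fs ! j) - 1))"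

definition restriction_set :: "'a set list \<Rightarrow> nat \<Rightarrow> 'a set" where
  "restriction_set Fs j = (THE R. R \<subseteq> Fs ! j \<and>
     gen_complex (set (take (Suc j) Fs)) - gen_complex (set (take j Fs))
       = {S. R \<subseteq> S \<and> S \<subseteq> Fs ! j})"

definition IP :: "'a set \<Rightarrow> 'a set set \<Rightarrow> ('a \<Rightarrow> real) \<Rightarrow> 'a set \<Rightarrow> 'a set" where
  "IP E \<B> l B = {b\<in>B. \<exists>b'\<in>E - B. l b' < l b \<and> insert b' (B - {b}) \<in> \<B>}"

end

theory Submission
  imports Defs
begin

lemma mb_fin: "matroid_bases E BB \<Longrightarrow> B \<in> BB \<Longrightarrow> finite B"
  unfolding matroid_bases_def by (meson finite_subset)

lemma mb_sub: "matroid_bases E BB \<Longrightarrow> B \<in> BB \<Longrightarrow> B \<subseteq> E"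
  unfolding matroid_bases_def by blast

lemma mb_exch: "matroid_bases E BB \<Longrightarrow> B1 \<in> BB \<Longrightarrow> B2 \<in> BB \<Longrightarrow> x \<in> B1 - B2
  \<Longrightarrow> \<exists>y\<in>B2 - B1. insert y (B1 - {x}) \<in> BB"
  unfolding matroid_bases_def by blast

lemma mb_anti: "matroid_bases E BB \<Longrightarrow> B \<in> BB \<Longrightarrow> B' \<in> BB \<Longrightarrow> B \<subseteq> B' \<Longrightarrow> B = B'"
proof (rule ccontr)
  assume M: "matroid_bases E BB" and b: "B \<in> BB" "B' \<in> BB" "B \<subseteq> B'" "B \<noteq> B'"
  then obtain x where "x \<in> B' - B" by blast
  from mb_exch[OF M b(2) b(1) this] obtain y where "y \<in> B - B'" by blast
  with b show False by blast
qed

lemma local_opt: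
  assumes M: "matroid_bases E BB" and B1: "B1 \<in> BB"
    and noimp: "\<forall>x\<in>T. \<forall>y. y \<notin> B1 \<longrightarrow> insert y (B1 - {x}) \<in> BB \<longrightarrow> l x \<le> l y"
  shows "B2 \<in> BB \<Longrightarrow> B1 - B2 \<subseteq> T \<Longrightarrow> sum l B1 \<le> sum (l::'a \<Rightarrow> real) B2"
proof (induction "card (B2 - B1)" arbitrary: B2 rule: less_induct)
  case less
  show ?case
  proof (cases "B2 - B1 = {}")
    case True
    then have "B2 = B1" using mb_anti[OF M less(2) B1] by blast
    then show ?thesis by simp
  next
    case False
    have fin2: "finite B2" using mb_fin[OF M less(2)] .
    have finD: "finite (B2 - B1)" using fin2 by simp
    define m where "m = Max (l ` (B2 - B1))"
    have "m \<in> l ` (B2 - B1)" unfolding m_def using finD False by simp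
    then obtain x where x: "x \<in> B2 - B1" "l x = m" by blast
    have xmax: "\<forall>w\<in>B2 - B1. l w \<le> l x" using x finD unfolding m_def by simp
    obtain z where z: "z \<in> B1 - B2" "insert z (B2 - {x}) \<in> BB"
      using mb_exch[OF M less(2) B1 x(1)] by blast
    obtain y where y: "y \<in> B2 - B1" "insert y (B1 - {z}) \<in> BB"
      using mb_exch[OF M B1 less(2) z(1)] by blast
    have "z \<in> T" using z less(3) by blast
    then have "l z \<le> l y" using noimp y by blast
    also have "l y \<le> l x" using xmax y by blast
    finally have lzx: "l z \<le> l x" .
    define B2' where "B2' = insert z (B2 - {x})"
    have eq: "B2' - B1 = (B2 - B1) - {x}" unfolding B2'_def using z x by blast
    have "card (B2' - B1) < card (B2 - B1)" unfolding eq using x finD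
      by (meson card_Diff1_less)
    moreover have "B1 - B2' \<subseteq> T" unfolding B2'_def using less(3) x by blast
    ultimately have IH: "sum l B1 \<le> sum l B2'" using less(1) z(2) unfolding B2'_def by blast
    have "sum l B2' = l z + sum l (B2 - {x})" unfolding B2'_def
      using z fin2 by (simp add: sum.insert)
    also have "sum l B2 = l x + sum l (B2 - {x})" using x fin2 by (meson DiffD1 sum.remove)
    ultimately show ?thesis using IH lzx by linarith
  qed
qed

lemma improve:
  assumes M: "matroid_bases E BB" and B1: "B1 \<in> BB" and B2: "B2 \<in> BB"
    and lt: "sum l B2 < sum (l::'a \<Rightarrow> real) B1"
  shows "\<exists>x\<in>B1 - B2. \<exists>y. y \<notin> B1 \<and> l y < l x \<and> insert y (B1 - {x}) \<in> BB"
proof (rule ccontr)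
  assume "\<not> ?thesis"
  then have "\<forall>x\<in>B1 - B2. \<forall>y. y \<notin> B1 \<longrightarrow> insert y (B1 - {x}) \<in> BB \<longrightarrow> l x \<le> l y"
    by (meson not_le)
  from local_opt[OF M B1 this B2] lt show False by simp
qed

lemma sum_exch:
  assumes "finite B" "x \<in> B" "y \<notin> B"
  shows "sum l (insert y (B - {x})) = sum l B - l x + (l y :: real)"
proof -
  have "sum l (insert y (B - {x})) = l y + sum l (B - {x})" using assms by simp
  moreover have "sum l B = l x + sum l (B - {x})" using assms by (meson sum.remove)
  ultimately show ?thesis by simp
qed

lemma in_set_take: "X \<in> set (take i xs) \<longleftrightarrow> (\<exists>k<i. k < length xs \<and> X = xs ! k)"
  by (auto simp: in_set_conv_nth)

lemma gen_take: "S \<in> gen_complex (set (take i xs)) \<longleftrightarrow> (\<exists>k<i. k < length xs \<and> S \<subseteq> xs ! k)"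
proof
  assume "S \<in> gen_complex (set (take i xs))"
  then obtain B where "B \<in> set (take i xs)" "S \<subseteq> B" unfolding gen_complex_def by blast
  then show "\<exists>k<i. k < length xs \<and> S \<subseteq> xs ! k" unfolding in_set_take by blast
next
  assume "\<exists>k<i. k < length xs \<and> S \<subseteq> xs ! k"
  then obtain k where "k < i" "k < length xs" "S \<subseteq> xs ! k" by blast
  then have "xs ! k \<in> set (take i xs)" unfolding in_set_take by blast
  then show "S \<in> gen_complex (set (take i xs))" unfolding gen_complex_def using \<open>S \<subseteq> xs ! k\<close> by blast
qed

theorem lemma6p1:
  fixes E :: "'a set" and \<B> :: "'a set set" and Bs :: "'a set list"
  assumes "matroid_bases E \<B>"
    and "distinct Bs" and "set Bs = \<B>"
    and "\<forall>i<length Bs. \<exists>l :: 'a \<Rightarrow> real. \<forall>j<length Bs.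
           ((\<Sum>b\<in>Bs ! j. l b) < (\<Sum>b\<in>Bs ! i. l b) \<longleftrightarrow> j < i)"
  shows "set Bs = facets (indep_complex \<B>) \<and> shelling_order Bs \<and>
         (\<forall>i<length Bs. \<forall>l :: 'a \<Rightarrow> real.
            (\<forall>j<length Bs. ((\<Sum>b\<in>Bs ! j. l b) < (\<Sum>b\<in>Bs ! i. l b) \<longleftrightarrow> j < i))
            \<longrightarrow> restriction_set Bs i = IP E \<B> l (Bs ! i))"
proof (intro conjI)
  note M = assms(1)
  have inB: "\<And>k. k < length Bs \<Longrightarrow> Bs ! k \<in> \<B>" using assms(3) by auto
  have idx: "\<And>B. B \<in> \<B> \<Longrightarrow> \<exists>k<length Bs. B = Bs ! k"
    using assms(3) by (metis in_set_conv_nth)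
  have smaller: "\<And>i l B. i < length Bs \<Longrightarrow>
      \<forall>j<length Bs. ((\<Sum>b\<in>Bs ! j. l b) < (\<Sum>b\<in>Bs ! i. l b) \<longleftrightarrow> j < i) \<Longrightarrow>
      B \<in> \<B> \<Longrightarrow> sum l B < sum l (Bs ! i) \<Longrightarrow> \<exists>k<i. B = Bs ! k"
  proof -
    fix i l B
    assume "i < length Bs" "\<forall>j<length Bs. ((\<Sum>b\<in>Bs ! j. l b) < (\<Sum>b\<in>Bs ! i. l b) \<longleftrightarrow> j < i)"
      "B \<in> \<B>" "sum l B < sum l (Bs ! i)"
    then show "\<exists>k<i. B = Bs ! k" using idx by blast
  qed
  show "set Bs = facets (indep_complex \<B>)"
    unfolding assms(3) facets_def indep_complex_def
    using mb_anti[OF M] by blast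
  show "shelling_order Bs"
    unfolding shelling_order_def
  proof (intro allI impI)
    fix j assume j: "1 \<le> j \<and> j < length Bs"
    define K where "K = gen_complex (set (take j Bs)) \<inter> gen_complex {Bs ! j}"
    have "Bs ! 0 \<in> set (take j Bs)" unfolding in_set_take using j by (intro exI[of _ 0]) auto
    then have "{} \<in> K" unfolding K_def gen_complex_def by auto
    moreover have "\<forall>F\<in>facets K. card F = card (Bs ! j) - 1"
    proof
      fix F assume F: "F \<in> facets K"
      then have FK: "F \<in> K" and Fmax: "\<forall>G\<in>K. F \<subseteq> G \<longrightarrow> G = F" unfolding facets_def by auto
      have FK1: "F \<in> gen_complex (set (take j Bs))" and FK2: "F \<in> gen_complex {Bs ! j}"
        using FK unfolding K_def by auto
      from FK2 have Fj: "F \<subseteq> Bs ! j" unfolding gen_complex_def by simp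
      from FK1 obtain i where i: "i < j" "F \<subseteq> Bs ! i"
        unfolding gen_take by blast
      obtain l :: "'a \<Rightarrow> real" where
        hl: "\<forall>k<length Bs. (sum l (Bs ! k) < sum l (Bs ! j) \<longleftrightarrow> k < j)"
        using assms(4) j by blast
      have "sum l (Bs ! i) < sum l (Bs ! j)" using hl i j by simp
      from improve[OF M inB inB this] j i Fj obtain x y where
        xy: "x \<in> Bs ! j - Bs ! i" "y \<notin> Bs ! j" "l y < l x" "insert y (Bs ! j - {x}) \<in> \<B>"
        by auto
      have finj: "finite (Bs ! j)" using mb_fin[OF M inB] j by simp
      have "sum l (insert y (Bs ! j - {x})) < sum l (Bs ! j)"
        using sum_exch[OF finj _ xy(2)] xy by simp
      from smaller[OF _ hl xy(4) this] j obtain k where k: "k < j" "insert y (Bs ! j - {x}) = Bs ! k"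
        by auto
      have "Bs ! j - {x} \<in> K" unfolding K_def Int_iff gen_take
        using k j by (auto simp: gen_complex_def)
      moreover have "F \<subseteq> Bs ! j - {x}" using i Fj xy by blast
      ultimately have "Bs ! j - {x} = F" using Fmax by blast
      then show "card F = card (Bs ! j) - 1" using xy finj by auto
    qed
    ultimately show "pure_card (gen_complex (set (take j Bs)) \<inter> gen_complex {Bs ! j}) (card (Bs ! j) - 1)"
      unfolding pure_card_def K_def by auto
  qed
  show "\<forall>i<length Bs. \<forall>l :: 'a \<Rightarrow> real.
            (\<forall>j<length Bs. ((\<Sum>b\<in>Bs ! j. l b) < (\<Sum>b\<in>Bs ! i. l b) \<longleftrightarrow> j < i))
            \<longrightarrow> restriction_set Bs i = IP E \<B> l (Bs ! i)"
  proof (intro allI impI)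
    fix i and l :: "'a \<Rightarrow> real"
    assume i: "i < length Bs"
      and hl: "\<forall>j<length Bs. ((\<Sum>b\<in>Bs ! j. l b) < (\<Sum>b\<in>Bs ! i. l b) \<longleftrightarrow> j < i)"
    define R where "R = IP E \<B> l (Bs ! i)"
    define N where "N = gen_complex (set (take (Suc i) Bs)) - gen_complex (set (take i Bs))"
    have finj: "finite (Bs ! i)" using mb_fin[OF M inB] i by simp
    have Rsub: "R \<subseteq> Bs ! i" unfolding R_def IP_def by auto
    have memN: "S \<in> N \<longleftrightarrow> S \<subseteq> Bs ! i \<and> \<not> (\<exists>k<i. S \<subseteq> Bs ! k)" for S
    proof -
      have "set (take (Suc i) Bs) = insert (Bs ! i) (set (take i Bs))"
        using i by (simp add: take_Suc_conv_app_nth)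
      moreover have "S \<in> gen_complex (insert (Bs ! i) A) \<longleftrightarrow> S \<subseteq> Bs ! i \<or> S \<in> gen_complex A" for A
        unfolding gen_complex_def by blast
      ultimately have "S \<in> N \<longleftrightarrow> (S \<subseteq> Bs ! i \<or> S \<in> gen_complex (set (take i Bs))) \<and> S \<notin> gen_complex (set (take i Bs))"
        unfolding N_def by simp
      then show ?thesis unfolding gen_take using i by auto
    qed
    have NR: "N = {S. R \<subseteq> S \<and> S \<subseteq> Bs ! i}"
    proof (intro set_eqI iffI)
      fix S assume "S \<in> N"
      then have S: "S \<subseteq> Bs ! i" "\<not> (\<exists>k<i. S \<subseteq> Bs ! k)" using memN by auto
      have "R \<subseteq> S"
      proof
        fix b assume b: "b \<in> R"
        show "b \<in> S"
        proof (rule ccontr)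
          assume bS: "b \<notin> S"
          from b obtain b' where bb: "b \<in> Bs ! i" "b' \<in> E - Bs ! i" "l b' < l b"
            "insert b' (Bs ! i - {b}) \<in> \<B>"
            unfolding R_def IP_def by auto
          have "sum l (insert b' (Bs ! i - {b})) < sum l (Bs ! i)"
            using sum_exch[OF finj bb(1), of b' l] bb by simp
          from smaller[OF i hl bb(4) this] obtain k where
            "k < i" "insert b' (Bs ! i - {b}) = Bs ! k" by auto
          moreover have "S \<subseteq> insert b' (Bs ! i - {b})" using S bS by blast
          ultimately show False using S by metis
        qed
      qed
      then show "S \<in> {S. R \<subseteq> S \<and> S \<subseteq> Bs ! i}" using S by auto
    next
      fix S assume "S \<in> {S. R \<subseteq> S \<and> S \<subseteq> Bs ! i}"
      then have S: "R \<subseteq> S" "S \<subseteq> Bs ! i" by auto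
      have "\<not> (\<exists>k<i. S \<subseteq> Bs ! k)"
      proof
        assume "\<exists>k<i. S \<subseteq> Bs ! k"
        then obtain k where k: "k < i" "S \<subseteq> Bs ! k" by auto
        have "sum l (Bs ! k) < sum l (Bs ! i)" using hl k i by simp
        from improve[OF M inB[OF i] inB this] k i obtain x y where
          xy: "x \<in> Bs ! i - Bs ! k" "y \<notin> Bs ! i" "l y < l x" "insert y (Bs ! i - {x}) \<in> \<B>"
          by auto
        have "y \<in> E" using mb_sub[OF M xy(4)] by auto
        then have "x \<in> R" unfolding R_def IP_def using xy by auto
        then show False using S k xy by blast
      qed
      then show "S \<in> N" using memN S by auto
    qed
    show "restriction_set Bs i = IP E \<B> l (Bs ! i)"
      unfolding restriction_set_def R_def[symmetric] N_def[symmetric]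
    proof (rule the_equality)
      show "R \<subseteq> Bs ! i \<and> N = {S. R \<subseteq> S \<and> S \<subseteq> Bs ! i}" using Rsub NR by auto
    next
      fix R' assume "R' \<subseteq> Bs ! i \<and> N = {S. R' \<subseteq> S \<and> S \<subseteq> Bs ! i}"
      then have "{S. R' \<subseteq> S \<and> S \<subseteq> Bs ! i} = {S. R \<subseteq> S \<and> S \<subseteq> Bs ! i}" "R' \<subseteq> Bs ! i"
        using NR by auto
      then show "R' = R" using Rsub by blast
    qed
  qed
qed

end
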